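(* Let $K$ be a field, let $X$ be a set, let $F \subseteq K\langle X\rangle$ be such that no polynomial in $F$ has a constant term, and let $f \in (F)$. Let $Q=(V,E,X,s,t,l)$ be a labelled quiver whose edges have unique labels in $X$ (i.e. $l$ is injective), and assume that $f$ and all elements of $F$ are compatible with $Q$. Then, for every representation $\mathcal{R}=(\mathcal{V},\varphi)$ of $Q$ over $K$ such that the realizations of the elements of $F$ with respect to $\mathcal{R}$ are zero, the realization of $f$ with respect to $\mathcal{R}$ is zero.
   Context: $K\langle X\rangle$ denotes the free algebra of noncommutative polynomials in the indeterminates $X$ with coefficients in $K$; monomials are words in $\langle X\rangle$ (the free monoid on $X$, including the empty word $1$). Every $f$ has a unique representation $f=\sum_m c_m m$ with finitely many nonzero $c_m\in K$, and $\operatorname{supp}(f)=\{m : c_m\neq 0\}$. $(F)$ is the two-sided ideal generated by $F$. A labelled quiver $Q=(V,E,X,s,t,l)$ consists of a set of vertices $V$, a set of edges $E$, maps $s,t:E\to V$ (source, target) and a labelling $l:E\to X$. A nonempty path $p=e_n\cdots e_1$ (edges with $s(e_{i+1})=t(e_i)$) has label $l(p)=l(e_n)\cdots l(e_1)\in\langle X\rangle$, source $s(e_1)$ and target $t(e_n)$; for each vertex $v$ there is an empty path $\epsilon_v$ with label $1$ and source and target $v$. For a monomial $m$, $\sigma(m)=\{(s(p),t(p)) : p \text{ a path in } Q \text{ with } l(p)=m\}$, and for a polynomial $f$, $\sigma(f)=\bigcap_{m\in\operatorname{supp}(f)}\sigma(m)$ (so $\sigma(0)=V\times V$). $f$ is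 compatible with $Q$ if $\sigma(f)\neq\emptyset$. For $v,w\in V$ let $K\langle X\rangle_{v,w}=\{f : (v,w)\in\sigma(f)\}$. A representation $(\mathcal{V},\varphi)$ of $Q$ over $K$ assigns to each vertex $v$ a $K$-vector space $\mathcal{V}_v$ and to each edge $e$ a $K$-linear map $\varphi(e):\mathcal{V}_{s(e)}\to\mathcal{V}_{t(e)}$. For $v,w\in V$, the realization map $\varphi_{v,w}:K\langle X\rangle_{v,w}\to L(\mathcal{V}_v,\mathcal{V}_w)$ is the $K$-linear map with $\varphi_{v,w}(l(e_n\cdots e_1))=\varphi(e_n)\cdots\varphi(e_1)$ for each nonempty path $e_n\cdots e_1$ from $v$ to $w$ and $\varphi_{v,v}(1)=\mathrm{id}_{\mathcal{V}_v}$; for $f\in K\langle X\rangle_{v,w}$, $\varphi_{v,w}(f)$ is called a realization of $f$ with respect to the representation. (Under the hypotheses of unique labels and no constant terms, these maps are well defined and a compatible nonzero polynomial has a unique realization.) *)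

theory Defs
  imports Complex_Main "HOL-Library.Poly_Mapping"
begin

text \<open>Noncommutative polynomials K<X>: finitely supported maps from words
  (lists over the alphabet type 'x; [] is the empty word 1) to coefficients.
  A word x1 x2 ... xn is the list [x1, x2, ..., xn].\<close>

type_synonym ('x, 'k) ncpoly = "'x list \<Rightarrow>\<^sub>0 'k"

definition ncmult :: "('x, 'k::semiring_0) ncpoly \<Rightarrow> ('x, 'k) ncpoly \<Rightarrow> ('x, 'k) ncpoly" where
  "ncmult p q = (\<Sum>a\<in>Poly_Mapping.keys p. \<Sum>b\<in>Poly_Mapping.keys q. Poly_Mapping.single (a @ b) (Poly_Mapping.lookup p a * Poly_Mapping.lookup q b))"

inductive_set ideal_gen :: "('x, 'k::comm_ring_1) ncpoly set \<Rightarrow> ('x, 'k) ncpoly set"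
  for F where
  zero: "0 \<in> ideal_gen F"
| gen: "g \<in> F \<Longrightarrow> g \<in> ideal_gen F"
| add: "a \<in> ideal_gen F \<Longrightarrow> b \<in> ideal_gen F \<Longrightarrow> a + b \<in> ideal_gen F"
| mult_left: "a \<in> ideal_gen F \<Longrightarrow> ncmult p a \<in> ideal_gen F"
| mult_right: "a \<in> ideal_gen F \<Longrightarrow> ncmult a p \<in> ideal_gen F"

definition quiver :: "'v set \<Rightarrow> 'e set \<Rightarrow> ('e \<Rightarrow> 'v) \<Rightarrow> ('e \<Rightarrow> 'v) \<Rightarrow> ('e \<Rightarrow> 'x) \<Rightarrow> bool" where
  "quiver V E s t l \<longleftrightarrow> (\<forall>e\<in>E. s e \<in> V \<and> t e \<in> V)"

text \<open>A path e_n ... e_1 is the list [e_n, ..., e_1]; is_path V E s t v w p means p is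
  a path with source v and target w (for p = [] this is the empty path at v, so v = w).\<close>
definition is_path :: "'v set \<Rightarrow> 'e set \<Rightarrow> ('e \<Rightarrow> 'v) \<Rightarrow> ('e \<Rightarrow> 'v) \<Rightarrow> 'v \<Rightarrow> 'v \<Rightarrow> 'e list \<Rightarrow> bool" where
  "is_path V E s t v w p \<longleftrightarrow>
     (if p = [] then v = w \<and> v \<in> V
      else set p \<subseteq> E \<and> s (last p) = v \<and> t (hd p) = w \<and>
           (\<forall>i. Suc i < length p \<longrightarrow> s (p ! i) = t (p ! Suc i)))"

definition path_label :: "('e \<Rightarrow> 'x) \<Rightarrow> 'e list \<Rightarrow> 'x list" where
  "path_label l p = map l p"

definition sigma_mono :: "'v set \<Rightarrow> 'e set \<Rightarrow> ('e \<Rightarrow> 'v) \<Rightarrow> ('e \<Rightarrow> 'v) \<Rightarrow> ('e \<Rightarrow> 'x) \<Rightarrow> 'x list \<Rightarrow> ('v \<times> 'v) set" where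
  "sigma_mono V E s t l m = {(v, w). \<exists>p. is_path V E s t v w p \<and> path_label l p = m}"

text \<open>sigma(f) = intersection of sigma(m) over supp f (with sigma(0) = V x V).\<close>
definition sigma :: "'v set \<Rightarrow> 'e set \<Rightarrow> ('e \<Rightarrow> 'v) \<Rightarrow> ('e \<Rightarrow> 'v) \<Rightarrow> ('e \<Rightarrow> 'x) \<Rightarrow> ('x, 'k::zero) ncpoly \<Rightarrow> ('v \<times> 'v) set" where
  "sigma V E s t l f = (V \<times> V) \<inter> (\<Inter>m\<in>Poly_Mapping.keys f. sigma_mono V E s t l m)"

definition compatible :: "'v set \<Rightarrow> 'e set \<Rightarrow> ('e \<Rightarrow> 'v) \<Rightarrow> ('e \<Rightarrow> 'v) \<Rightarrow> ('e \<Rightarrow> 'x) \<Rightarrow> ('x, 'k::zero) ncpoly \<Rightarrow> bool" where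
  "compatible V E s t l f \<longleftrightarrow> sigma V E s t l f \<noteq> {}"

text \<open>A representation of the quiver over the field 'k: the vector spaces are given as
  subspaces Sp v (v in V) of an ambient 'k-vector space 'w (with scalar multiplication
  scale), and each edge e gets a map phi e that is K-linear from Sp (s e) to Sp (t e).\<close>
definition representation ::
  "('k::field \<Rightarrow> 'w::ab_group_add \<Rightarrow> 'w) \<Rightarrow> 'v set \<Rightarrow> 'e set \<Rightarrow> ('e \<Rightarrow> 'v) \<Rightarrow> ('e \<Rightarrow> 'v)
     \<Rightarrow> ('v \<Rightarrow> 'w set) \<Rightarrow> ('e \<Rightarrow> 'w \<Rightarrow> 'w) \<Rightarrow> bool" where
  "representation scale V E s t Sp \<phi> \<longleftrightarrow>
     vector_space scale \<and>
     (\<forall>v\<in>V. 0 \<in> Sp v \<and> (\<forall>x\<in>Sp v. \<forall>y\<in>Sp v. x + y \<in> Sp v) \<and> (\<forall>c. \<forall>x\<in>Sp v. scale c x \<in> Sp v)) \<and>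
     (\<forall>e\<in>E. (\<forall>x\<in>Sp (s e). \<phi> e x \<in> Sp (t e)) \<and>
            (\<forall>x\<in>Sp (s e). \<forall>y\<in>Sp (s e). \<phi> e (x + y) = \<phi> e x + \<phi> e y) \<and>
            (\<forall>c. \<forall>x\<in>Sp (s e). \<phi> e (scale c x) = scale c (\<phi> e x)))"

definition path_map :: "('e \<Rightarrow> 'w \<Rightarrow> 'w) \<Rightarrow> 'e list \<Rightarrow> 'w \<Rightarrow> 'w" where
  "path_map \<phi> p x = foldr \<phi> p x"

text \<open>Realization phi_{v,w}(f), for f in K<X>_{v,w}, applied to a vector x: linear extension of
  the assignment l(p) |-> map of p, for p the (under unique labels, unique) path from v to w
  with label m.\<close>
definition realization ::
  "('k::field \<Rightarrow> 'w::ab_group_add \<Rightarrow> 'w) \<Rightarrow> 'v set \<Rightarrow> 'e set \<Rightarrow> ('e \<Rightarrow> 'v) \<Rightarrow> ('e \<Rightarrow> 'v)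
     \<Rightarrow> ('e \<Rightarrow> 'x) \<Rightarrow> ('e \<Rightarrow> 'w \<Rightarrow> 'w) \<Rightarrow> 'v \<Rightarrow> 'v \<Rightarrow> ('x, 'k) ncpoly \<Rightarrow> 'w \<Rightarrow> 'w" where
  "realization scale V E s t l \<phi> v w f x =
     (\<Sum>m\<in>Poly_Mapping.keys f. scale (Poly_Mapping.lookup f m)
        (path_map \<phi> (THE p. is_path V E s t v w p \<and> path_label l p = m) x))"

end

theory Submission
  imports Defs
begin

primrec Tm :: "'e set \<Rightarrow> ('e \<Rightarrow> 'v) \<Rightarrow> ('e \<Rightarrow> 'v) \<Rightarrow> ('e \<Rightarrow> 'x) \<Rightarrow> ('e \<Rightarrow> 'w \<Rightarrow> 'w::zero)
   \<Rightarrow> 'v \<Rightarrow> 'v \<Rightarrow> 'x list \<Rightarrow> 'w \<Rightarrow> 'w" where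
  "Tm E s t l \<phi> v w [] y = (if v = w then y else 0)"
| "Tm E s t l \<phi> v w (x # m) y =
    (if \<exists>e\<in>E. l e = x \<and> t e = w
     then \<phi> (THE e. e \<in> E \<and> l e = x \<and> t e = w)
            (Tm E s t l \<phi> v (s (THE e. e \<in> E \<and> l e = x \<and> t e = w)) m y)
     else 0)"

lemma is_path_Nil: "is_path V E s t v w [] \<longleftrightarrow> v = w \<and> v \<in> V"
  by (simp add: is_path_def)

lemma is_path_Cons:
  assumes Q: "quiver V E s t l"
  shows "is_path V E s t v w (e # p) \<longleftrightarrow> e \<in> E \<and> t e = w \<and> is_path V E s t v (s e) p"
proof (cases "p = []")
  case True
  then show ?thesis using Q by (auto simp: is_path_def quiver_def)
next
  case False
  have A: "(\<forall>i. Suc i < length (e # p) \<longrightarrow> s ((e # p) ! i) = t ((e # p) ! Suc i)) \<longleftrightarrow>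
        s e = t (hd p) \<and> (\<forall>i. Suc i < length p \<longrightarrow> s (p ! i) = t (p ! Suc i))"
  proof
    assume H: "\<forall>i. Suc i < length (e # p) \<longrightarrow> s ((e # p) ! i) = t ((e # p) ! Suc i)"
    have "s e = t (hd p)" using H[rule_format, of 0] False by (simp add: hd_conv_nth)
    moreover have "\<forall>i. Suc i < length p \<longrightarrow> s (p ! i) = t (p ! Suc i)"
      using H by (metis Suc_less_eq length_Cons nth_Cons_Suc)
    ultimately show "s e = t (hd p) \<and> (\<forall>i. Suc i < length p \<longrightarrow> s (p ! i) = t (p ! Suc i))" by simp
  next
    assume H: "s e = t (hd p) \<and> (\<forall>i. Suc i < length p \<longrightarrow> s (p ! i) = t (p ! Suc i))"
    show "\<forall>i. Suc i < length (e # p) \<longrightarrow> s ((e # p) ! i) = t ((e # p) ! Suc i)"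
    proof (intro allI impI)
      fix i assume "Suc i < length (e # p)"
      then show "s ((e # p) ! i) = t ((e # p) ! Suc i)"
        using H False by (cases i) (auto simp: hd_conv_nth)
    qed
  qed
  show ?thesis using False unfolding is_path_def A by auto
qed

lemma is_path_set: "is_path V E s t v w p \<Longrightarrow> set p \<subseteq> E"
  by (auto simp: is_path_def split: if_splits)

lemma is_path_unique:
  assumes "inj_on l E" "is_path V E s t v w p" "is_path V E s t v' w' q" "map l p = map l q"
  shows "p = q"
  using assms is_path_set[OF assms(2)] is_path_set[OF assms(3)]
  by (metis inj_on_subset le_sup_iff map_inj_on)

locale qrep = vector_space scale
  for scale :: "'k::field \<Rightarrow> 'w::ab_group_add \<Rightarrow> 'w" +
  fixes V :: "'v set" and E :: "'e set" and s t :: "'e \<Rightarrow> 'v" and l :: "'e \<Rightarrow> 'x"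
    and Sp :: "'v \<Rightarrow> 'w set" and \<phi> :: "'e \<Rightarrow> 'w \<Rightarrow> 'w"
  assumes Q: "quiver V E s t l" and inj: "inj_on l E"
    and Sp0: "v \<in> V \<Longrightarrow> 0 \<in> Sp v"
    and Spadd: "v \<in> V \<Longrightarrow> x \<in> Sp v \<Longrightarrow> y \<in> Sp v \<Longrightarrow> x + y \<in> Sp v"
    and Spscale: "v \<in> V \<Longrightarrow> x \<in> Sp v \<Longrightarrow> scale c x \<in> Sp v"
    and phi_in: "e \<in> E \<Longrightarrow> x \<in> Sp (s e) \<Longrightarrow> \<phi> e x \<in> Sp (t e)"
    and phi_add: "e \<in> E \<Longrightarrow> x \<in> Sp (s e) \<Longrightarrow> y \<in> Sp (s e) \<Longrightarrow> \<phi> e (x + y) = \<phi> e x + \<phi> e y"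
    and phi_scale: "e \<in> E \<Longrightarrow> x \<in> Sp (s e) \<Longrightarrow> \<phi> e (scale c x) = scale c (\<phi> e x)"
begin

abbreviation T where "T \<equiv> Tm E s t l \<phi>"

definition Phi :: "'v \<Rightarrow> 'v \<Rightarrow> ('x, 'k) ncpoly \<Rightarrow> 'w \<Rightarrow> 'w" where
  "Phi v w h y = (\<Sum>m\<in>Poly_Mapping.keys h. scale (Poly_Mapping.lookup h m) (T v w m y))"

lemma sV: "e \<in> E \<Longrightarrow> s e \<in> V" and tV: "e \<in> E \<Longrightarrow> t e \<in> V"
  using Q by (auto simp: quiver_def)

lemma the_t: "e \<in> E \<Longrightarrow> (THE e'. e' \<in> E \<and> l e' = l e \<and> t e' = t e) = e"
  using inj by (intro the_equality) (auto dest: inj_onD)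

lemma the_s: "e \<in> E \<Longrightarrow> (THE e'. e' \<in> E \<and> l e' = l e \<and> s e' = s e) = e"
  using inj by (intro the_equality) (auto dest: inj_onD)

lemma T_Cons_edge: "e \<in> E \<Longrightarrow> T v (t e) (l e # m) y = \<phi> e (T v (s e) m y)"
  using the_t by auto

lemma T_Cons_none: "\<not> (\<exists>e\<in>E. l e = x \<and> t e = w) \<Longrightarrow> T v w (x # m) y = 0"
  by auto

lemma phi0: "e \<in> E \<Longrightarrow> \<phi> e 0 = 0"
  using phi_add[of e 0 0] Sp0[OF sV] by simp

lemma phi_sum:
  assumes e: "e \<in> E" and fin: "finite S" and z: "\<forall>i\<in>S. z i \<in> Sp (s e)"
  shows "\<phi> e (\<Sum>i\<in>S. scale (c i) (z i)) = (\<Sum>i\<in>S. scale (c i) (\<phi> e (z i)))"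
  using fin z
proof (induction S rule: finite_induct)
  case empty then show ?case using phi0[OF e] by simp
next
  case (insert a S)
  have in1: "scale (c a) (z a) \<in> Sp (s e)" using insert Spscale sV e by auto
  have in2: "(\<Sum>i\<in>S. scale (c i) (z i)) \<in> Sp (s e)"
    using insert(4) proof (induction S rule: infinite_finite_induct)
    case (infinite A) then show ?case using Sp0 sV e by simp
  next
    case empty then show ?case using Sp0 sV e by simp
  next
    case (insert x F) then show ?case using Spadd Spscale sV e by auto
  qed
  show ?case using insert phi_add[OF e in1 in2] phi_scale[OF e] by simp
qed

lemma T_in: "y \<in> Sp v \<Longrightarrow> w \<in> V \<Longrightarrow> T v w m y \<in> Sp w"
proof (induction m arbitrary: w)
  case Nil then show ?case using Sp0 by auto
next
  case (Cons x m)
  show ?case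
  proof (cases "\<exists>e\<in>E. l e = x \<and> t e = w")
    case True
    then obtain e where e: "e \<in> E" "l e = x" "t e = w" by blast
    have "T v (s e) m y \<in> Sp (s e)" using Cons sV[OF e(1)] by blast
    then have "T v w (x # m) y = \<phi> e (T v (s e) m y)" using e T_Cons_edge[OF e(1)] by simp
    then show ?thesis using phi_in[OF e(1)] e \<open>T v (s e) m y \<in> Sp (s e)\<close> by simp
  next
    case False then show ?thesis using Cons Sp0 T_Cons_none[OF False] by simp
  qed
qed

lemma T_path: "is_path V E s t v w p \<Longrightarrow> T v w (map l p) y = path_map \<phi> p y"
proof (induction p arbitrary: w)
  case Nil then show ?case by (simp add: is_path_Nil path_map_def)
next
  case (Cons e p)
  then have e: "e \<in> E" "t e = w" "is_path V E s t v (s e) p" using is_path_Cons[OF Q] by auto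
  then show ?case using Cons.IH the_t[OF e(1)] by (auto simp: path_map_def)
qed

lemma T_nonzero: "T v w m y \<noteq> 0 \<Longrightarrow> v \<in> V \<Longrightarrow> \<exists>p. is_path V E s t v w p \<and> map l p = m"
proof (induction m arbitrary: w)
  case Nil then show ?case by (auto simp: is_path_Nil split: if_splits)
next
  case (Cons x m)
  then obtain e where e: "e \<in> E" "l e = x" "t e = w" by (auto split: if_splits)
  then have "T v w (x # m) y = \<phi> e (T v (s e) m y)" using T_Cons_edge[OF e(1)] by simp
  then have "T v (s e) m y \<noteq> 0" using Cons.prems phi0[OF e(1)] by auto
  then obtain p where "is_path V E s t v (s e) p" "map l p = m" using Cons by blast
  then show ?case using e by (intro exI[of _ "e # p"]) (simp add: is_path_Cons[OF Q])
qed

lemma T_snoc_edge: "e \<in> E \<Longrightarrow> T (s e) w (m @ [l e]) y = T (t e) w m (\<phi> e y)"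
proof (induction m arbitrary: w)
  case Nil
  show ?case
  proof (cases "t e = w")
    case True
    then show ?thesis using T_Cons_edge[OF Nil, of "s e" "[]" y] by simp
  next
    case False
    show ?thesis
    proof (cases "\<exists>e'\<in>E. l e' = l e \<and> t e' = w")
      case True
      then obtain e' where e': "e' \<in> E" "l e' = l e" "t e' = w" by blast
      then have "e' \<noteq> e" using False by auto
      have "T (s e) w [l e] y = \<phi> e' (T (s e) (s e') [] y)"
        using T_Cons_edge[OF e'(1), of "s e" "[]" y] e' by simp
      also have "s e \<noteq> s e'" using \<open>e' \<noteq> e\<close> e' Nil inj by (metis inj_onD)
      then have "T (s e) (s e') [] y = 0" by simp
      finally show ?thesis using phi0[OF e'(1)] False by simp
    next
      case False
      then show ?thesis using T_Cons_none[OF False, of "s e" "[]" y] \<open>t e \<noteq> w\<close> by simp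
    qed
  qed
next
  case (Cons x' m)
  show ?case
  proof (cases "\<exists>e'\<in>E. l e' = x' \<and> t e' = w")
    case True
    then obtain e' where e': "e' \<in> E" "l e' = x'" "t e' = w" by blast
    have "T (s e) w ((x' # m) @ [l e]) y = \<phi> e' (T (s e) (s e') (m @ [l e]) y)"
      using T_Cons_edge[OF e'(1)] e' by simp
    moreover have "T (t e) w (x' # m) (\<phi> e y) = \<phi> e' (T (t e) (s e') m (\<phi> e y))"
      using T_Cons_edge[OF e'(1)] e' by simp
    ultimately show ?thesis using Cons.IH[OF Cons.prems, of "s e'"] by simp
  next
    case False
    then show ?thesis using T_Cons_none[OF False] by simp
  qed
qed

lemma T_snoc_none: "\<not> (\<exists>e\<in>E. l e = x \<and> s e = v) \<Longrightarrow> T v w (m @ [x]) y = 0"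
proof (induction m arbitrary: w)
  case Nil
  show ?case
  proof (cases "\<exists>e'\<in>E. l e' = x \<and> t e' = w")
    case True
    then obtain e' where e': "e' \<in> E" "l e' = x" "t e' = w" by blast
    have "T v w [x] y = \<phi> e' (T v (s e') [] y)"
      using T_Cons_edge[OF e'(1), of v "[]" y] e' by simp
    moreover have "v \<noteq> s e'" using Nil e' by auto
    ultimately show ?thesis using phi0[OF e'(1)] by simp
  next
    case False
    then show ?thesis using T_Cons_none[OF False, of v "[]" y] by simp
  qed
next
  case (Cons x' m)
  show ?case
  proof (cases "\<exists>e'\<in>E. l e' = x' \<and> t e' = w")
    case True
    then obtain e' where e': "e' \<in> E" "l e' = x'" "t e' = w" by blast
    have "T v w ((x' # m) @ [x]) y = \<phi> e' (T v (s e') (m @ [x]) y)"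
      using T_Cons_edge[OF e'(1)] e' by simp
    then show ?thesis using Cons phi0[OF e'(1)] by simp
  next
    case False
    then show ?thesis using T_Cons_none[OF False] by simp
  qed
qed


lemma Phi_superset:
  assumes "finite S" "Poly_Mapping.keys h \<subseteq> S"
  shows "Phi v w h y = (\<Sum>m\<in>S. scale (Poly_Mapping.lookup h m) (T v w m y))"
  unfolding Phi_def
  by (rule sum.mono_neutral_left) (use assms in \<open>auto simp: in_keys_iff\<close>)

lemma Phi_zero[simp]: "Phi v w 0 y = 0"
  by (simp add: Phi_def)

lemma Phi_add: "Phi v w (a + b) y = Phi v w a y + Phi v w b y"
proof -
  let ?S = "Poly_Mapping.keys a \<union> Poly_Mapping.keys b"
  have "Phi v w (a + b) y = (\<Sum>m\<in>?S. scale (Poly_Mapping.lookup (a + b) m) (T v w m y))"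
    by (rule Phi_superset) (auto dest: subsetD[OF keys_add])
  also have "\<dots> = (\<Sum>m\<in>?S. scale (Poly_Mapping.lookup a m) (T v w m y)) +
                 (\<Sum>m\<in>?S. scale (Poly_Mapping.lookup b m) (T v w m y))"
    by (simp add: lookup_add scale_left_distrib sum.distrib)
  also have "\<dots> = Phi v w a y + Phi v w b y"
    by (subst (1 2) Phi_superset[where S = ?S]) auto
  finally show ?thesis .
qed

lemma Phi_sum: "Phi v w (\<Sum>i\<in>I. h i) y = (\<Sum>i\<in>I. Phi v w (h i) y)"
  by (induction I rule: infinite_finite_induct) (auto simp: Phi_add)

lemma Phi_single: "Phi v w (Poly_Mapping.single m c) y = scale c (T v w m y)"
  by (simp add: Phi_def)

definition Pz :: "('x, 'k) ncpoly \<Rightarrow> bool" where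
  "Pz h \<longleftrightarrow> (\<forall>v\<in>V. \<forall>w\<in>V. \<forall>y\<in>Sp v. Phi v w h y = 0)"

lemma left_lemma:
  assumes Pa: "Pz a"
  shows "v \<in> V \<Longrightarrow> w \<in> V \<Longrightarrow> y \<in> Sp v \<Longrightarrow>
    (\<Sum>\<beta>\<in>Poly_Mapping.keys a. scale (Poly_Mapping.lookup a \<beta>) (T v w (\<alpha> @ \<beta>) y)) = 0"
proof (induction \<alpha> arbitrary: w)
  case Nil
  then show ?case using Pa by (simp add: Pz_def Phi_def)
next
  case (Cons x \<alpha>)
  show ?case
  proof (cases "\<exists>e\<in>E. l e = x \<and> t e = w")
    case True
    then obtain e where e: "e \<in> E" "l e = x" "t e = w" by blast
    have "(\<Sum>\<beta>\<in>Poly_Mapping.keys a. scale (Poly_Mapping.lookup a \<beta>) (T v w ((x # \<alpha>) @ \<beta>) y))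
        = (\<Sum>\<beta>\<in>Poly_Mapping.keys a. scale (Poly_Mapping.lookup a \<beta>) (\<phi> e (T v (s e) (\<alpha> @ \<beta>) y)))"
      using T_Cons_edge[OF e(1)] e by simp
    also have "\<dots> = \<phi> e (\<Sum>\<beta>\<in>Poly_Mapping.keys a. scale (Poly_Mapping.lookup a \<beta>) (T v (s e) (\<alpha> @ \<beta>) y))"
      by (rule phi_sum[symmetric]) (use e(1) T_in sV Cons.prems in auto)
    also have "\<dots> = 0" using Cons.IH[of "s e"] Cons.prems sV[OF e(1)] phi0[OF e(1)] by simp
    finally show ?thesis .
  next
    case False
    then show ?thesis using T_Cons_none[OF False] by simp
  qed
qed

lemma right_lemma:
  assumes Pa: "Pz a"
  shows "v \<in> V \<Longrightarrow> w \<in> V \<Longrightarrow> y \<in> Sp v \<Longrightarrow>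
    (\<Sum>\<beta>\<in>Poly_Mapping.keys a. scale (Poly_Mapping.lookup a \<beta>) (T v w (\<beta> @ \<alpha>) y)) = 0"
proof (induction \<alpha> arbitrary: v y rule: rev_induct)
  case Nil
  then show ?case using Pa by (simp add: Pz_def Phi_def)
next
  case (snoc x \<alpha>)
  show ?case
  proof (cases "\<exists>e\<in>E. l e = x \<and> s e = v")
    case True
    then obtain e where e: "e \<in> E" "l e = x" "s e = v" by blast
    have "(\<Sum>\<beta>\<in>Poly_Mapping.keys a. scale (Poly_Mapping.lookup a \<beta>) (T v w (\<beta> @ \<alpha> @ [x]) y))
        = (\<Sum>\<beta>\<in>Poly_Mapping.keys a. scale (Poly_Mapping.lookup a \<beta>) (T (t e) w (\<beta> @ \<alpha>) (\<phi> e y)))"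
    proof (rule sum.cong[OF refl])
      fix \<beta>
      show "scale (Poly_Mapping.lookup a \<beta>) (T v w (\<beta> @ \<alpha> @ [x]) y) = scale (Poly_Mapping.lookup a \<beta>) (T (t e) w (\<beta> @ \<alpha>) (\<phi> e y))"
        using T_snoc_edge[OF e(1), of w "\<beta> @ \<alpha>" y] e by simp
    qed
    also have "\<dots> = 0" using snoc.IH[of "t e" "\<phi> e y"] snoc.prems tV[OF e(1)] phi_in[OF e(1)] e by simp
    finally show ?thesis .
  next
    case False
    have "T v w (\<beta> @ \<alpha> @ [x]) y = 0" for \<beta> using T_snoc_none[OF False, of w "\<beta> @ \<alpha>" y] by simp
    then show ?thesis by simp
  qed
qed

lemma ncmult_expand: "Phi v w (ncmult p a) y =
  (\<Sum>\<alpha>\<in>Poly_Mapping.keys p. \<Sum>\<beta>\<in>Poly_Mapping.keys a.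
     scale (Poly_Mapping.lookup p \<alpha> * Poly_Mapping.lookup a \<beta>) (T v w (\<alpha> @ \<beta>) y))"
  by (simp add: ncmult_def Phi_sum Phi_single)

lemma Pz_left: "Pz a \<Longrightarrow> Pz (ncmult p a)"
  unfolding Pz_def[of "ncmult p a"]
proof (intro ballI)
  fix v w y assume a: "Pz a" and vw: "v \<in> V" "w \<in> V" "y \<in> Sp v"
  have "Phi v w (ncmult p a) y = (\<Sum>\<alpha>\<in>Poly_Mapping.keys p. scale (Poly_Mapping.lookup p \<alpha>)
     (\<Sum>\<beta>\<in>Poly_Mapping.keys a. scale (Poly_Mapping.lookup a \<beta>) (T v w (\<alpha> @ \<beta>) y)))"
    by (simp add: ncmult_expand scale_sum_right)
  also have "\<dots> = 0" using left_lemma[OF a vw] by simp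
  finally show "Phi v w (ncmult p a) y = 0" .
qed

lemma Pz_right: "Pz a \<Longrightarrow> Pz (ncmult a p)"
  unfolding Pz_def[of "ncmult a p"]
proof (intro ballI)
  fix v w y assume a: "Pz a" and vw: "v \<in> V" "w \<in> V" "y \<in> Sp v"
  have "Phi v w (ncmult a p) y = (\<Sum>\<beta>\<in>Poly_Mapping.keys a. \<Sum>\<alpha>\<in>Poly_Mapping.keys p.
     scale (Poly_Mapping.lookup p \<alpha> * Poly_Mapping.lookup a \<beta>) (T v w (\<beta> @ \<alpha>) y))"
    by (simp add: ncmult_expand mult.commute)
  also have "\<dots> = (\<Sum>\<alpha>\<in>Poly_Mapping.keys p. scale (Poly_Mapping.lookup p \<alpha>)
     (\<Sum>\<beta>\<in>Poly_Mapping.keys a. scale (Poly_Mapping.lookup a \<beta>) (T v w (\<beta> @ \<alpha>) y)))"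
    by (subst sum.swap) (simp add: scale_sum_right)
  also have "\<dots> = 0" using right_lemma[OF a vw] by simp
  finally show "Phi v w (ncmult a p) y = 0" .
qed

lemma realization_Phi:
  assumes "(v, w) \<in> sigma V E s t l h"
  shows "realization scale V E s t l \<phi> v w h y = Phi v w h y"
  unfolding realization_def Phi_def
proof (rule sum.cong[OF refl])
  fix m assume m: "m \<in> Poly_Mapping.keys h"
  then obtain p where p: "is_path V E s t v w p" "path_label l p = m"
    using assms by (auto simp: sigma_def sigma_mono_def)
  have "(THE p. is_path V E s t v w p \<and> path_label l p = m) = p"
    using p is_path_unique[OF inj] by (intro the_equality) (auto simp: path_label_def)
  then show "scale (Poly_Mapping.lookup h m) (path_map \<phi> (THE p. is_path V E s t v w p \<and> path_label l p = m) y) =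
        scale (Poly_Mapping.lookup h m) (T v w m y)"
    using T_path[OF p(1)] p(2) by (simp add: path_label_def)
qed

lemma Pz_gen:
  assumes nc: "Poly_Mapping.lookup g [] = 0" and comp: "compatible V E s t l g"
    and z: "\<forall>(v, w)\<in>sigma V E s t l g. \<forall>x\<in>Sp v. realization scale V E s t l \<phi> v w g x = 0"
  shows "Pz g"
  unfolding Pz_def
proof (intro ballI)
  fix v w y assume vw: "v \<in> V" "w \<in> V" "y \<in> Sp v"
  obtain v0 w0 where vw0: "(v0, w0) \<in> sigma V E s t l g" using comp by (auto simp: compatible_def)
  show "Phi v w g y = 0"
  proof (cases "(v, w) = (v0, w0)")
    case True
    then show ?thesis using z vw0 vw realization_Phi by fastforce
  next
    case False
    have "T v w m y = 0" if m: "m \<in> Poly_Mapping.keys g" for m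
    proof (rule ccontr)
      assume "T v w m y \<noteq> 0"
      then obtain p where p: "is_path V E s t v w p" "map l p = m" using T_nonzero vw by blast
      obtain q where q: "is_path V E s t v0 w0 q" "map l q = m"
        using vw0 m by (auto simp: sigma_def sigma_mono_def path_label_def)
      have "m \<noteq> []" using m nc by (auto simp: in_keys_iff)
      then have "p \<noteq> []" using p by auto
      have "p = q" using is_path_unique[OF inj p(1) q(1)] p q by simp
      then have "v = v0 \<and> w = w0" using p(1) q(1) \<open>p \<noteq> []\<close> by (auto simp: is_path_def)
      then show False using False by simp
    qed
    then show ?thesis by (simp add: Phi_def)
  qed
qed

lemma Pz_ideal:
  assumes "\<forall>g\<in>F. Pz g" "f \<in> ideal_gen F"
  shows "Pz f"
  using assms(2)
proof (induction rule: ideal_gen.induct)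
  case zero then show ?case by (simp add: Pz_def)
next
  case (gen g) then show ?case using assms(1) by blast
next
  case (add a b) then show ?case by (simp add: Pz_def Phi_add)
next
  case (mult_left a p) then show ?case using Pz_left by blast
next
  case (mult_right a p) then show ?case using Pz_right by blast
qed

end

theorem theorem1p1:
  fixes F :: "('x, 'k::field) ncpoly set"
    and f :: "('x, 'k) ncpoly"
    and V :: "'v set" and E :: "'e set"
    and s t :: "'e \<Rightarrow> 'v" and l :: "'e \<Rightarrow> 'x"
    and scale :: "'k \<Rightarrow> 'w::ab_group_add \<Rightarrow> 'w"
    and Sp :: "'v \<Rightarrow> 'w set" and \<phi> :: "'e \<Rightarrow> 'w \<Rightarrow> 'w"
  assumes no_const: "\<forall>g\<in>F. Poly_Mapping.lookup g [] = 0"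
    and f_in: "f \<in> ideal_gen F"
    and Q: "quiver V E s t l"
    and unique_labels: "inj_on l E"
    and f_compat: "compatible V E s t l f"
    and F_compat: "\<forall>g\<in>F. compatible V E s t l g"
    and rep: "representation scale V E s t Sp \<phi>"
    and F_zero: "\<forall>g\<in>F. \<forall>(v, w)\<in>sigma V E s t l g. \<forall>x\<in>Sp v.
                   realization scale V E s t l \<phi> v w g x = 0"
  shows "\<forall>(v, w)\<in>sigma V E s t l f. \<forall>x\<in>Sp v. realization scale V E s t l \<phi> v w f x = 0"
proof -
  interpret qrep scale V E s t l Sp \<phi>
    using Q unique_labels rep unfolding representation_def qrep_def qrep_axioms_def by blast
  have "Pz f" using Pz_ideal[OF _ f_in] Pz_gen no_const F_compat F_zero by blast
  then show ?thesis
    using realization_Phi by (auto simp: Pz_def sigma_def)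
qed

end
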